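(* Let $P\in\mathbb{Q}_{\ge0}^{N\times N}$ be the transition matrix of a reversible and ergodic Markov chain on $V$ with stationary distribution $\pi$ and mixing rate $t^*$. For the rotor-router model on a multidigraph for $P$, with any initial configuration, $$\left|\chi^{(T)}_w-\mu^{(T)}_w\right|\le\frac{3\pi_w}{\pi_{\min}}\,t^*\,\Delta\,\bar\Delta$$ for all $w\in V$ and $T\ge0$.
   Context: Let $V=\{1,\dots,N\}$ and let $P\in\mathbb{Q}_{\ge 0}^{N\times N}$ be an ergodic (irreducible, aperiodic) stochastic matrix with stationary distribution $\pi$; $\pi_{\min}=\min_v\pi_v$; reversible means $\pi_uP_{u,v}=\pi_vP_{v,u}$ for all $u,v$. For $v\in V$ let $\mathcal N(v)=\{u: P_{v,u}>0\}$, $\delta(v)=|\mathcal N(v)|$, $\Delta=\max_v\delta(v)$. Total variation distance $d_{TV}(\xi,\zeta)=\frac12\|\xi-\zeta\|_1$; mixing time $\tau(\varepsilon)=\max_{v}\min\{t\ge0: d_{TV}(P^t_{v,\cdot},\pi)\le\varepsilon\}$; mixing rate $t^*=\tau(1/4)$. For each $v$ let $\bar\delta(v)$ be a positive integer with $\bar\delta(v)P_{v,u}\in\mathbb{Z}$ for all $u$, and $\bar\Delta=\max_v\bar\delta(v)$. The rotor router: $\sigma_v(0),\dots,\sigma_v(\bar\delta(v)-1)\in\mathcal N(v)$ is any sequence in which each $u\in\mathcal N(v)$ occurs exactly $\bar\delta(v)P_{v,u}$ times, extended by $\sigma_v(i)=\sigma_v(i\bmod\bar\delta(v))$. Write $I_{v,u}[z,z')=|\{j\in\{z,\dots,z'-1\}:\sigma_v(j)=u\}|$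 (zero if $z'\le z$). Given $\chi^{(0)}\in\mathbb{Z}_{\ge0}^N$, set $Z^{(t)}_{v,u}=I_{v,u}\big[\sum_{s=0}^{t-1}\chi^{(s)}_v,\sum_{s=0}^{t}\chi^{(s)}_v\big)$, $\chi^{(t+1)}_u=\sum_vZ^{(t)}_{v,u}$, $\mu^{(0)}=\chi^{(0)}$, $\mu^{(t)}=\mu^{(0)}P^t$. *)

theory Defs
  imports Complex_Main
begin

text \<open>States are the elements of a finite type 'v (playing the role of V = {1..N}).
  Matrices are functions 'v \<Rightarrow> 'v \<Rightarrow> real.\<close>

fun mpow :: "('v::finite \<Rightarrow> 'v \<Rightarrow> real) \<Rightarrow> nat \<Rightarrow> 'v \<Rightarrow> 'v \<Rightarrow> real" where
  "mpow P 0 u v = (if u = v then 1 else 0)"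
| "mpow P (Suc t) u v = (\<Sum>w\<in>UNIV. mpow P t u w * P w v)"

definition stochastic :: "('v::finite \<Rightarrow> 'v \<Rightarrow> real) \<Rightarrow> bool" where
  "stochastic P \<longleftrightarrow> (\<forall>u v. P u v \<ge> 0) \<and> (\<forall>u. (\<Sum>v\<in>UNIV. P u v) = 1)"

definition rational_matrix :: "('v::finite \<Rightarrow> 'v \<Rightarrow> real) \<Rightarrow> bool" where
  "rational_matrix P \<longleftrightarrow> (\<forall>u v. P u v \<in> \<rat>)"

definition irreducible_chain :: "('v::finite \<Rightarrow> 'v \<Rightarrow> real) \<Rightarrow> bool" where
  "irreducible_chain P \<longleftrightarrow> (\<forall>u v. \<exists>t>0. mpow P t u v > 0)"

definition aperiodic_chain :: "('v::finite \<Rightarrow> 'v \<Rightarrow> real) \<Rightarrow> bool" where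
  "aperiodic_chain P \<longleftrightarrow> (\<forall>v. Gcd {t. t > 0 \<and> mpow P t v v > 0} = (1::nat))"

definition ergodic :: "('v::finite \<Rightarrow> 'v \<Rightarrow> real) \<Rightarrow> bool" where
  "ergodic P \<longleftrightarrow> irreducible_chain P \<and> aperiodic_chain P"

definition stationary :: "('v::finite \<Rightarrow> 'v \<Rightarrow> real) \<Rightarrow> ('v \<Rightarrow> real) \<Rightarrow> bool" where
  "stationary P \<pi> \<longleftrightarrow> (\<forall>v. \<pi> v \<ge> 0) \<and> (\<Sum>v\<in>UNIV. \<pi> v) = 1 \<and>
     (\<forall>v. (\<Sum>u\<in>UNIV. \<pi> u * P u v) = \<pi> v)"

definition reversible :: "('v::finite \<Rightarrow> 'v \<Rightarrow> real) \<Rightarrow> ('v \<Rightarrow> real) \<Rightarrow> bool" where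
  "reversible P \<pi> \<longleftrightarrow> (\<forall>u v. \<pi> u * P u v = \<pi> v * P v u)"

definition pi_min :: "('v::finite \<Rightarrow> real) \<Rightarrow> real" where
  "pi_min \<pi> = Min (range \<pi>)"

definition d_TV :: "('v::finite \<Rightarrow> real) \<Rightarrow> ('v \<Rightarrow> real) \<Rightarrow> real" where
  "d_TV \<xi> \<zeta> = (1/2) * (\<Sum>v\<in>UNIV. \<bar>\<xi> v - \<zeta> v\<bar>)"

definition mixing_time :: "('v::finite \<Rightarrow> 'v \<Rightarrow> real) \<Rightarrow> ('v \<Rightarrow> real) \<Rightarrow> real \<Rightarrow> nat" where
  "mixing_time P \<pi> \<epsilon> = Max (range (\<lambda>v. LEAST t. d_TV (mpow P t v) \<pi> \<le> \<epsilon>))"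

definition mixing_rate :: "('v::finite \<Rightarrow> 'v \<Rightarrow> real) \<Rightarrow> ('v \<Rightarrow> real) \<Rightarrow> nat" where
  "mixing_rate P \<pi> = mixing_time P \<pi> (1/4)"

definition nbrs :: "('v::finite \<Rightarrow> 'v \<Rightarrow> real) \<Rightarrow> 'v \<Rightarrow> 'v set" where
  "nbrs P v = {u. P v u > 0}"

definition max_deg :: "('v::finite \<Rightarrow> 'v \<Rightarrow> real) \<Rightarrow> nat" where
  "max_deg P = Max (range (\<lambda>v. card (nbrs P v)))"

definition max_dbar :: "('v::finite \<Rightarrow> nat) \<Rightarrow> nat" where
  "max_dbar dbar = Max (range dbar)"

definition admissible_dbar :: "('v::finite \<Rightarrow> 'v \<Rightarrow> real) \<Rightarrow> ('v \<Rightarrow> nat) \<Rightarrow> bool" where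
  "admissible_dbar P dbar \<longleftrightarrow> (\<forall>v. dbar v > 0 \<and> (\<forall>u. real (dbar v) * P v u \<in> \<int>))"

definition rotor_seq :: "('v::finite \<Rightarrow> 'v \<Rightarrow> real) \<Rightarrow> ('v \<Rightarrow> nat) \<Rightarrow> ('v \<Rightarrow> nat \<Rightarrow> 'v) \<Rightarrow> bool" where
  "rotor_seq P dbar \<sigma> \<longleftrightarrow>
     (\<forall>v u. real (card {i. i < dbar v \<and> \<sigma> v i = u}) = real (dbar v) * P v u) \<and>
     (\<forall>v i. \<sigma> v i = \<sigma> v (i mod dbar v))"

definition I_cnt :: "('v \<Rightarrow> nat \<Rightarrow> 'v) \<Rightarrow> 'v \<Rightarrow> 'v \<Rightarrow> nat \<Rightarrow> nat \<Rightarrow> nat" where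
  "I_cnt \<sigma> v u z z' = card {j. z \<le> j \<and> j < z' \<and> \<sigma> v j = u}"

text \<open>State at time t: (\<chi>^{(t)}, \<lambda>v. \<Sum>_{s<t} \<chi>^{(s)}_v).\<close>
fun rr_state :: "('v::finite \<Rightarrow> nat \<Rightarrow> 'v) \<Rightarrow> ('v \<Rightarrow> nat) \<Rightarrow> nat \<Rightarrow> ('v \<Rightarrow> nat) \<times> ('v \<Rightarrow> nat)" where
  "rr_state \<sigma> \<chi>0 0 = (\<chi>0, (\<lambda>v. 0))"
| "rr_state \<sigma> \<chi>0 (Suc t) =
     (let (\<chi>, c) = rr_state \<sigma> \<chi>0 t in
       ((\<lambda>u. \<Sum>v\<in>UNIV. I_cnt \<sigma> v u (c v) (c v + \<chi> v)), (\<lambda>v. c v + \<chi> v)))"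

definition rr_chi :: "('v::finite \<Rightarrow> nat \<Rightarrow> 'v) \<Rightarrow> ('v \<Rightarrow> nat) \<Rightarrow> nat \<Rightarrow> 'v \<Rightarrow> nat" where
  "rr_chi \<sigma> \<chi>0 t = fst (rr_state \<sigma> \<chi>0 t)"

definition rr_mu :: "('v::finite \<Rightarrow> 'v \<Rightarrow> real) \<Rightarrow> ('v \<Rightarrow> nat) \<Rightarrow> nat \<Rightarrow> 'v \<Rightarrow> real" where
  "rr_mu P \<chi>0 t w = (\<Sum>v\<in>UNIV. real (\<chi>0 v) * mpow P t v w)"

end

theory Submission
  imports Defs
begin


lemma sum_swap_r: "(\<Sum>w\<in>UNIV. (\<Sum>z\<in>UNIV. f z w) * (g w::real)) = (\<Sum>z\<in>UNIV. \<Sum>w\<in>UNIV. f z w * g w)"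
  unfolding sum_distrib_right by (rule sum.swap)

lemma mpow_add: "mpow P (a+b) x y = (\<Sum>z\<in>UNIV. mpow P a x z * mpow P b z y)"
proof (induction b arbitrary: y)
  case 0
  have "(\<Sum>z\<in>UNIV. mpow P a x z * mpow P 0 z y) = (\<Sum>z\<in>UNIV. if z = y then mpow P a x z else 0)"
    by (rule sum.cong) auto
  then show ?case by simp
next
  case (Suc b)
  have "mpow P (a + Suc b) x y = (\<Sum>w\<in>UNIV. mpow P (a+b) x w * P w y)" by simp
  also have "\<dots> = (\<Sum>w\<in>UNIV. (\<Sum>z\<in>UNIV. mpow P a x z * mpow P b z w) * P w y)" using Suc by simp
  also have "\<dots> = (\<Sum>z\<in>UNIV. mpow P a x z * (\<Sum>w\<in>UNIV. mpow P b z w * P w y))"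
    unfolding sum_swap_r by (simp add: sum_distrib_left mult.assoc)
  finally show ?case by simp
qed

lemma mpow_1: "mpow P 1 x y = P x y"
proof -
  have "mpow P 1 x y = (\<Sum>w\<in>UNIV. (if x = w then 1 else 0) * P w y)" by simp
  also have "\<dots> = (\<Sum>w\<in>UNIV. if w = x then P w y else 0)" by (rule sum.cong) auto
  also have "\<dots> = P x y" by simp
  finally show ?thesis .
qed

lemma mpow_Suc_left: "mpow P (Suc k) x y = (\<Sum>z\<in>UNIV. P x z * mpow P k z y)"
proof -
  from mpow_add[of P 1 k x y] have "mpow P (Suc k) x y = (\<Sum>z\<in>UNIV. mpow P 1 x z * mpow P k z y)"
    by (simp only: plus_1_eq_Suc)
  also have "\<dots> = (\<Sum>z\<in>UNIV. P x z * mpow P k z y)" by (simp only: mpow_1)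
  finally show ?thesis .
qed

lemma stoch_nonneg: "stochastic P \<Longrightarrow> P u v \<ge> 0" by (simp add: stochastic_def)
lemma stoch_sum: "stochastic P \<Longrightarrow> (\<Sum>v\<in>UNIV. P u v) = 1" by (simp add: stochastic_def)
lemma stoch_le1: assumes "stochastic P" shows "P u v \<le> 1"
proof -
  have "P u v \<le> (\<Sum>v\<in>UNIV. P u v)" by (rule member_le_sum) (auto simp: stoch_nonneg[OF assms])
  then show ?thesis using stoch_sum[OF assms] by simp
qed

lemma mpow_nonneg: "stochastic P \<Longrightarrow> mpow P k x y \<ge> 0"
  by (induction k arbitrary: y) (auto intro!: sum_nonneg mult_nonneg_nonneg simp: stoch_nonneg)

lemma mpow_sum: assumes "stochastic P" shows "(\<Sum>y\<in>UNIV. mpow P k x y) = 1"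
proof (induction k)
  case 0 then show ?case by simp
next
  case (Suc k)
  have "(\<Sum>y\<in>UNIV. mpow P (Suc k) x y) = (\<Sum>w\<in>UNIV. mpow P k x w * (\<Sum>y\<in>UNIV. P w y))"
    by (simp add: sum_distrib_left) (rule sum.swap)
  also have "\<dots> = 1" using Suc by (simp add: stoch_sum[OF assms])
  finally show ?case .
qed

lemma mpow_ge: assumes "stochastic P" shows "mpow P (a+b) x y \<ge> mpow P a x z * mpow P b z y"
  unfolding mpow_add
  by (rule member_le_sum) (auto intro!: mult_nonneg_nonneg mpow_nonneg assms)

lemma stat_pow: assumes "stationary P \<pi>" shows "(\<Sum>u\<in>UNIV. \<pi> u * mpow P t u v) = \<pi> v"
proof (induction t arbitrary: v)
  case 0
  have "(\<Sum>u\<in>UNIV. \<pi> u * mpow P 0 u v) = (\<Sum>u\<in>UNIV. if u = v then \<pi> u else 0)"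
    by (rule sum.cong) auto
  then show ?case by simp
next
  case (Suc t)
  have "(\<Sum>u\<in>UNIV. \<pi> u * mpow P (Suc t) u v) = (\<Sum>w\<in>UNIV. (\<Sum>u\<in>UNIV. \<pi> u * mpow P t u w) * P w v)"
    unfolding sum_swap_r by (simp add: sum_distrib_left mult.assoc)
  also have "\<dots> = \<pi> v" using Suc assms by (simp add: stationary_def)
  finally show ?case .
qed

lemma rev_pow: assumes "reversible P \<pi>" shows "\<pi> u * mpow P k u w = \<pi> w * mpow P k w u"
proof (induction k arbitrary: u w)
  case 0 then show ?case by simp
next
  case (Suc k)
  have "\<pi> u * mpow P (Suc k) u w = (\<Sum>m\<in>UNIV. (\<pi> u * mpow P k u m) * P m w)"
    by (simp add: sum_distrib_left mult.assoc)
  also have "\<dots> = (\<Sum>m\<in>UNIV. mpow P k m u * (\<pi> m * P m w))"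
    using Suc by (simp add: mult.commute mult.left_commute)
  also have "\<dots> = (\<Sum>m\<in>UNIV. mpow P k m u * (\<pi> w * P w m))"
    using assms by (simp add: reversible_def)
  also have "\<dots> = \<pi> w * (\<Sum>m\<in>UNIV. P w m * mpow P k m u)"
    by (simp add: sum_distrib_left mult.commute mult.left_commute)
  also have "\<dots> = \<pi> w * mpow P (Suc k) w u" by (simp only: mpow_Suc_left)
  finally show ?case .
qed

lemma pi_pos: assumes "stationary P \<pi>" "irreducible_chain P" "stochastic P" shows "\<pi> v > 0"
proof -
  have s: "(\<Sum>u\<in>UNIV. \<pi> u) = 1" and nn: "\<And>u. \<pi> u \<ge> 0" using assms(1) by (auto simp: stationary_def)
  have "\<exists>u. \<pi> u > 0"
  proof (rule ccontr)
    assume "\<not> ?thesis"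
    then have "\<forall>u. \<pi> u \<le> 0" by (meson not_less)
    then have "(\<Sum>u\<in>UNIV. \<pi> u) \<le> 0" by (simp add: sum_nonpos)
    then show False using s by simp
  qed
  then obtain u where "\<pi> u > 0" by blast
  moreover obtain t where "mpow P t u v > 0" using assms(2) by (auto simp: irreducible_chain_def)
  ultimately have "\<pi> u * mpow P t u v > 0" by simp
  also have "\<pi> u * mpow P t u v \<le> (\<Sum>u\<in>UNIV. \<pi> u * mpow P t u v)"
    by (rule member_le_sum) (auto intro!: mult_nonneg_nonneg nn mpow_nonneg assms(3))
  finally show ?thesis using stat_pow[OF assms(1)] by simp
qed



definition psi :: "('v \<Rightarrow> 'v \<Rightarrow> real) \<Rightarrow> ('v \<Rightarrow> nat \<Rightarrow> 'v) \<Rightarrow> 'v \<Rightarrow> 'v \<Rightarrow> nat \<Rightarrow> real" where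
  "psi P \<sigma> v u z = (\<Sum>j\<in>{0..<z}. of_bool (\<sigma> v j = u) - P v u)"

lemma I_cnt_sum: "real (I_cnt \<sigma> v u a b) = (\<Sum>j\<in>{a..<b}. of_bool (\<sigma> v j = u))"
proof -
  have "{j. a \<le> j \<and> j < b \<and> \<sigma> v j = u} = {a..<b} \<inter> {j. \<sigma> v j = u}" by auto
  then show ?thesis unfolding I_cnt_def by simp
qed

lemma I_psi: "real (I_cnt \<sigma> v u a (a+x)) = psi P \<sigma> v u (a+x) - psi P \<sigma> v u a + real x * P v u"
proof -
  have "psi P \<sigma> v u (a+x) = psi P \<sigma> v u a + (\<Sum>j\<in>{a..<a+x}. of_bool (\<sigma> v j = u) - P v u)"
    unfolding psi_def by (simp add: sum.atLeastLessThan_concat)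
  also have "(\<Sum>j\<in>{a..<a+x}. of_bool (\<sigma> v j = u) - P v u) = real (I_cnt \<sigma> v u a (a+x)) - real x * P v u"
    by (simp add: I_cnt_sum sum_subtractf)
  finally show ?thesis by simp
qed

lemma psi_0[simp]: "psi P \<sigma> v u 0 = 0" by (simp add: psi_def)

definition cnt where "cnt \<sigma> \<chi>0 t = snd (rr_state \<sigma> \<chi>0 t)"

lemma rr_chi_0: "rr_chi \<sigma> \<chi>0 0 = \<chi>0" by (simp add: rr_chi_def)
lemma cnt_0: "cnt \<sigma> \<chi>0 0 v = 0" by (simp add: cnt_def)
lemma rr_chi_Suc: "rr_chi \<sigma> \<chi>0 (Suc t) u = (\<Sum>v\<in>UNIV. I_cnt \<sigma> v u (cnt \<sigma> \<chi>0 t v) (cnt \<sigma> \<chi>0 t v + rr_chi \<sigma> \<chi>0 t v))"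
  by (simp add: rr_chi_def cnt_def split_beta Let_def)
lemma cnt_Suc: "cnt \<sigma> \<chi>0 (Suc t) v = cnt \<sigma> \<chi>0 t v + rr_chi \<sigma> \<chi>0 t v"
  by (simp add: rr_chi_def cnt_def split_beta Let_def)

definition delta where
  "delta P \<sigma> \<chi>0 t u = (\<Sum>v\<in>UNIV. psi P \<sigma> v u (cnt \<sigma> \<chi>0 (Suc t) v) - psi P \<sigma> v u (cnt \<sigma> \<chi>0 t v))"

lemma chi_step: "real (rr_chi \<sigma> \<chi>0 (Suc t) u) = delta P \<sigma> \<chi>0 t u + (\<Sum>v\<in>UNIV. real (rr_chi \<sigma> \<chi>0 t v) * P v u)"
  unfolding rr_chi_Suc delta_def of_nat_sum cnt_Suc by (simp add: I_psi[where P=P] sum.distrib)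

lemma chi_formula:
  "real (rr_chi \<sigma> \<chi>0 T w) = rr_mu P \<chi>0 T w + (\<Sum>t<T. \<Sum>u\<in>UNIV. delta P \<sigma> \<chi>0 t u * mpow P (T-1-t) u w)"
proof (induction T arbitrary: w)
  case 0
  have "rr_mu P \<chi>0 0 w = (\<Sum>v\<in>UNIV. if v = w then real (\<chi>0 v) else 0)"
    unfolding rr_mu_def by (rule sum.cong) auto
  then show ?case by (simp add: rr_chi_0)
next
  case (Suc T)
  have "real (rr_chi \<sigma> \<chi>0 (Suc T) w) = delta P \<sigma> \<chi>0 T w + (\<Sum>v\<in>UNIV. real (rr_chi \<sigma> \<chi>0 T v) * P v w)"
    by (rule chi_step)
  also have "(\<Sum>v\<in>UNIV. real (rr_chi \<sigma> \<chi>0 T v) * P v w) =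
     (\<Sum>v\<in>UNIV. rr_mu P \<chi>0 T v * P v w) + (\<Sum>v\<in>UNIV. (\<Sum>t<T. \<Sum>u\<in>UNIV. delta P \<sigma> \<chi>0 t u * mpow P (T-1-t) u v) * P v w)"
    unfolding Suc by (simp add: sum.distrib distrib_right)
  also have "(\<Sum>v\<in>UNIV. rr_mu P \<chi>0 T v * P v w) = rr_mu P \<chi>0 (Suc T) w"
    unfolding rr_mu_def sum_swap_r by (simp add: sum_distrib_left mult.assoc)
  also have "(\<Sum>v\<in>UNIV. (\<Sum>t<T. \<Sum>u\<in>UNIV. delta P \<sigma> \<chi>0 t u * mpow P (T-1-t) u v) * P v w)
      = (\<Sum>t<T. \<Sum>u\<in>UNIV. delta P \<sigma> \<chi>0 t u * mpow P (Suc T-1-t) u w)"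
  proof -
    have "(\<Sum>v\<in>UNIV. (\<Sum>t<T. \<Sum>u\<in>UNIV. delta P \<sigma> \<chi>0 t u * mpow P (T-1-t) u v) * P v w)
       = (\<Sum>t<T. \<Sum>u\<in>UNIV. delta P \<sigma> \<chi>0 t u * (\<Sum>v\<in>UNIV. mpow P (T-1-t) u v * P v w))"
    proof -
      have "(\<Sum>v\<in>UNIV. (\<Sum>t<T. \<Sum>u\<in>UNIV. delta P \<sigma> \<chi>0 t u * mpow P (T-1-t) u v) * P v w)
         = (\<Sum>v\<in>UNIV. \<Sum>t<T. \<Sum>u\<in>UNIV. delta P \<sigma> \<chi>0 t u * (mpow P (T-1-t) u v * P v w))"
        by (simp add: sum_distrib_right mult.assoc)
      also have "\<dots> = (\<Sum>t<T. \<Sum>v\<in>UNIV. \<Sum>u\<in>UNIV. delta P \<sigma> \<chi>0 t u * (mpow P (T-1-t) u v * P v w))"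
        by (rule sum.swap)
      also have "\<dots> = (\<Sum>t<T. \<Sum>u\<in>UNIV. \<Sum>v\<in>UNIV. delta P \<sigma> \<chi>0 t u * (mpow P (T-1-t) u v * P v w))"
        by (rule sum.cong[OF refl], rule sum.swap)
      also have "\<dots> = (\<Sum>t<T. \<Sum>u\<in>UNIV. delta P \<sigma> \<chi>0 t u * (\<Sum>v\<in>UNIV. mpow P (T-1-t) u v * P v w))"
        by (simp add: sum_distrib_left)
      finally show ?thesis .
    qed
    also have "\<dots> = (\<Sum>t<T. \<Sum>u\<in>UNIV. delta P \<sigma> \<chi>0 t u * mpow P (Suc T-1-t) u w)"
    proof (rule sum.cong[OF refl], rule sum.cong[OF refl])
      fix t u assume "t \<in> {..<T}"
      then have "Suc T - 1 - t = Suc (T - 1 - t)" by auto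
      then show "delta P \<sigma> \<chi>0 t u * (\<Sum>v\<in>UNIV. mpow P (T-1-t) u v * P v w) = delta P \<sigma> \<chi>0 t u * mpow P (Suc T-1-t) u w"
        by simp
    qed
    finally show ?thesis .
  qed
  finally have "real (rr_chi \<sigma> \<chi>0 (Suc T) w) = delta P \<sigma> \<chi>0 T w + rr_mu P \<chi>0 (Suc T) w + (\<Sum>t<T. \<Sum>u\<in>UNIV. delta P \<sigma> \<chi>0 t u * mpow P (Suc T-1-t) u w)"
    by simp
  moreover have "(\<Sum>u\<in>UNIV. delta P \<sigma> \<chi>0 T u * mpow P (Suc T-1-T) u w) = delta P \<sigma> \<chi>0 T w"
  proof -
    have "(\<Sum>u\<in>UNIV. delta P \<sigma> \<chi>0 T u * mpow P (Suc T-1-T) u w) = (\<Sum>u\<in>UNIV. if u = w then delta P \<sigma> \<chi>0 T u else 0)"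
      by (rule sum.cong) auto
    then show ?thesis by simp
  qed
  ultimately show ?case by simp
qed



lemma period_sum0:
  assumes "rotor_seq P dbar \<sigma>"
  shows "(\<Sum>j\<in>{0..<dbar v}. of_bool (\<sigma> v j = u) - P v u) = 0"
proof -
  have "{0..<dbar v} \<inter> {j. \<sigma> v j = u} = {i. i < dbar v \<and> \<sigma> v i = u}" by auto
  then have "(\<Sum>j\<in>{0..<dbar v}. (of_bool (\<sigma> v j = u)::real)) = real (dbar v) * P v u"
    using assms unfolding rotor_seq_def by simp
  then show ?thesis by (simp add: sum_subtractf)
qed

lemma psi_period:
  assumes "rotor_seq P dbar \<sigma>"
  shows "psi P \<sigma> v u (z + dbar v) = psi P \<sigma> v u z"
proof (induction z)
  case 0 then show ?case using period_sum0[OF assms] by (simp add: psi_def)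
next
  case (Suc z)
  have per: "\<sigma> v (z + dbar v) = \<sigma> v z"
    using assms unfolding rotor_seq_def by (metis mod_add_self2)
  have "psi P \<sigma> v u (Suc z + dbar v) = psi P \<sigma> v u (z + dbar v) + (of_bool (\<sigma> v (z + dbar v) = u) - P v u)"
    by (simp add: psi_def)
  also have "\<dots> = psi P \<sigma> v u (Suc z)" using Suc per by (simp add: psi_def)
  finally show ?case .
qed

lemma psi_mod:
  assumes "rotor_seq P dbar \<sigma>" "dbar v > 0"
  shows "psi P \<sigma> v u z = psi P \<sigma> v u (z mod dbar v)"
proof (induction z rule: less_induct)
  case (less z)
  show ?case
  proof (cases "z < dbar v")
    case True then show ?thesis by simp
  next
    case False
    then have z: "z = (z - dbar v) + dbar v" by simp
    have "psi P \<sigma> v u z = psi P \<sigma> v u (z - dbar v)"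
      using psi_period[OF assms(1), of v u "z - dbar v"] z by simp
    also have "\<dots> = psi P \<sigma> v u ((z - dbar v) mod dbar v)" using less assms(2) False by simp
    also have "(z - dbar v) mod dbar v = z mod dbar v" using False by (simp add: le_mod_geq)
    finally show ?thesis .
  qed
qed

lemma psi_small_bound:
  assumes "rotor_seq P dbar \<sigma>" "0 \<le> P v u" "P v u \<le> 1" "r < dbar v"
  shows "\<bar>psi P \<sigma> v u r\<bar> \<le> real (dbar v) / 2"
proof -
  let ?g = "\<lambda>j. (of_bool (\<sigma> v j = u)::real) - P v u"
  let ?p = "P v u" and ?d = "real (dbar v)"
  have gl: "?g j \<ge> - ?p" and gu: "?g j \<le> 1 - ?p" for j by auto
  have split: "psi P \<sigma> v u r + (\<Sum>j\<in>{r..<dbar v}. ?g j) = 0"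
    using period_sum0[OF assms(1), of v u] assms(4) unfolding psi_def
    by (simp add: sum.atLeastLessThan_concat)
  have a1: "psi P \<sigma> v u r \<le> real r * (1 - ?p)"
    unfolding psi_def using sum_mono[of "{0..<r}" ?g "\<lambda>_. 1 - ?p", OF gu] by simp
  have a2: "psi P \<sigma> v u r \<ge> - real r * ?p"
    unfolding psi_def using sum_mono[of "{0..<r}" "\<lambda>_. - ?p" ?g, OF gl] by simp
  have b1: "(\<Sum>j\<in>{r..<dbar v}. ?g j) \<le> real (dbar v - r) * (1 - ?p)"
    using sum_mono[of "{r..<dbar v}" ?g "\<lambda>_. 1 - ?p", OF gu] by simp
  have b2: "(\<Sum>j\<in>{r..<dbar v}. ?g j) \<ge> - (real (dbar v - r) * ?p)"
    using sum_mono[of "{r..<dbar v}" "\<lambda>_. - ?p" ?g, OF gl] by simp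
  have dr: "real (dbar v - r) = ?d - real r" using assms(4) by simp
  have r0: "0 \<le> real r" "real r \<le> ?d" using assms(4) by auto
  have neg: "psi P \<sigma> v u r = - (\<Sum>j\<in>{r..<dbar v}. ?g j)" using split by linarith
  show ?thesis
  proof (cases "?p \<le> 1/2")
    case True
    have "psi P \<sigma> v u r \<le> real (dbar v - r) * ?p" using neg b2 by linarith
    also have "\<dots> = (?d - real r) * ?p" using dr by simp
    also have "\<dots> \<le> (?d - real r) * (1/2)" using True r0 by (intro mult_left_mono) auto
    also have "\<dots> \<le> ?d / 2" using r0 by simp
    finally have u: "psi P \<sigma> v u r \<le> ?d / 2" .
    have "real r * ?p \<le> real r * (1/2)" using True r0 by (intro mult_left_mono) auto
    then have "- (real r * ?p) \<ge> - (?d / 2)" using r0 by simp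
    then show ?thesis using u a2 by simp
  next
    case False
    have "real r * (1 - ?p) \<le> real r * (1/2)" using False r0 by (intro mult_left_mono) auto
    then have u: "psi P \<sigma> v u r \<le> ?d / 2" using a1 r0 by simp
    have "psi P \<sigma> v u r \<ge> - (real (dbar v - r) * (1 - ?p))" using neg b1 by linarith
    moreover have "real (dbar v - r) * (1 - ?p) = (?d - real r) * (1 - ?p)" using dr by simp
    moreover have "(?d - real r) * (1 - ?p) \<le> (?d - real r) * (1/2)" using False r0 by (intro mult_left_mono) auto
    moreover have "(?d - real r) * (1/2) \<le> ?d / 2" using r0 by simp
    ultimately show ?thesis using u by simp
  qed
qed

lemma psi_bound:
  assumes "rotor_seq P dbar \<sigma>" "stochastic P" "dbar v > 0"
  shows "\<bar>psi P \<sigma> v u z\<bar> \<le> real (dbar v) / 2"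
proof -
  have "psi P \<sigma> v u z = psi P \<sigma> v u (z mod dbar v)" using psi_mod[OF assms(1,3)] .
  moreover have "\<bar>psi P \<sigma> v u (z mod dbar v)\<bar> \<le> real (dbar v) / 2"
    by (rule psi_small_bound[OF assms(1) stoch_nonneg[OF assms(2)] stoch_le1[OF assms(2)]]) (simp add: assms(3))
  ultimately show ?thesis by simp
qed

lemma psi_zero:
  assumes "rotor_seq P dbar \<sigma>" "dbar v > 0" "P v u = 0"
  shows "psi P \<sigma> v u z = 0"
proof -
  have "card {i. i < dbar v \<and> \<sigma> v i = u} = 0" using assms unfolding rotor_seq_def by (metis mult_zero_right of_nat_eq_0_iff)
  then have "\<And>i. i < dbar v \<Longrightarrow> \<sigma> v i \<noteq> u" by auto
  then have "\<And>j. \<sigma> v j \<noteq> u" using assms(1,2) unfolding rotor_seq_def by (metis mod_less_divisor)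
  then show ?thesis using assms(3) by (simp add: psi_def)
qed



lemma abel_id:
  "(\<Sum>t<Suc n. (f (Suc t) - f t) * (a (n - t)::real)) = f (Suc n) * a 0 - f 0 * a n + (\<Sum>k<n. f (n - k) * (a (Suc k) - a k))"
proof (induction n arbitrary: f)
  case 0 then show ?case by (simp add: algebra_simps)
next
  case (Suc n)
  have "(\<Sum>t<Suc (Suc n). (f (Suc t) - f t) * a (Suc n - t)) =
        (f 1 - f 0) * a (Suc n) + (\<Sum>t<Suc n. (f (Suc (Suc t)) - f (Suc t)) * a (n - t))"
    by (subst sum.lessThan_Suc_shift) simp
  also have "(\<Sum>t<Suc n. (f (Suc (Suc t)) - f (Suc t)) * a (n - t)) =
      f (Suc (Suc n)) * a 0 - f 1 * a n + (\<Sum>k<n. f (Suc (n - k)) * (a (Suc k) - a k))"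
    using Suc.IH[where f="\<lambda>t. f (Suc t)"] by simp
  also have "(\<Sum>k<n. f (Suc (n - k)) * (a (Suc k) - a k)) = (\<Sum>k<n. f (Suc n - k) * (a (Suc k) - a k))"
    by (rule sum.cong) (auto simp: Suc_diff_le)
  finally show ?case by (simp add: algebra_simps)
qed

lemma abel_bound:
  assumes "f 0 = 0" "\<And>t. \<bar>f t\<bar> \<le> M"
  shows "\<bar>\<Sum>t<T. (f (Suc t) - f t) * (a (T - 1 - t)::real)\<bar> \<le> M * (\<bar>a 0\<bar> + (\<Sum>k<T. \<bar>a (Suc k) - a k\<bar>))"
proof (cases T)
  case 0
  have "M \<ge> 0" using assms(2)[of 0] by simp
  then show ?thesis using 0 by simp
next
  case (Suc n)
  have M0: "M \<ge> 0" using assms(2)[of 0] by simp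
  have e: "(\<Sum>t<T. (f (Suc t) - f t) * a (T - 1 - t)) = f (Suc n) * a 0 + (\<Sum>k<n. f (n - k) * (a (Suc k) - a k))"
    using abel_id[where f=f and n=n and a=a] assms(1) Suc by simp
  have "\<bar>f (Suc n) * a 0\<bar> \<le> M * \<bar>a 0\<bar>" using assms(2) by (simp add: abs_mult mult_right_mono)
  moreover have "\<bar>\<Sum>k<n. f (n - k) * (a (Suc k) - a k)\<bar> \<le> (\<Sum>k<n. M * \<bar>a (Suc k) - a k\<bar>)"
    by (rule order_trans[OF sum_abs]) (rule sum_mono, simp add: abs_mult mult_right_mono assms(2))
  moreover have "(\<Sum>k<n. M * \<bar>a (Suc k) - a k\<bar>) \<le> (\<Sum>k<T. M * \<bar>a (Suc k) - a k\<bar>)"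
    using Suc M0 by (intro sum_mono2) auto
  ultimately show ?thesis unfolding e by (simp add: sum_distrib_left[symmetric] distrib_left)
qed

lemma max_deg_ge: "card (nbrs P v) \<le> max_deg P"
  unfolding max_deg_def by (rule Max_ge) auto
lemma max_dbar_ge: "dbar v \<le> max_dbar dbar"
  unfolding max_dbar_def by (rule Max_ge) auto
lemma pi_min_le: "pi_min \<pi> \<le> \<pi> v"
  unfolding pi_min_def by (rule Min_le) auto
lemma pi_min_pos: assumes "\<forall>v. \<pi> v > 0" shows "pi_min \<pi> > 0"
proof -
  have "pi_min \<pi> \<in> range \<pi>" unfolding pi_min_def by (rule Min_in) auto
  then show ?thesis using assms by auto
qed

lemma indeg_le:
  assumes "reversible P \<pi>" "\<forall>v. \<pi> v > 0"
  shows "card {v. P v u > 0} \<le> max_deg P"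
proof -
  have "{v. P v u > 0} \<subseteq> nbrs P u"
  proof
    fix v assume "v \<in> {v. P v u > 0}"
    then have "\<pi> v * P v u > 0" using assms(2) by simp
    then have "\<pi> u * P u v > 0" using assms(1) unfolding reversible_def by metis
    then have "P u v > 0" using assms(2) by (simp add: zero_less_mult_iff) (meson less_asym)
    then show "v \<in> nbrs P u" by (simp add: nbrs_def)
  qed
  then have "card {v. P v u > 0} \<le> card (nbrs P u)" by (rule card_mono[rotated]) simp
  then show ?thesis using max_deg_ge[of P u] by linarith
qed

lemma discrepancy:
  assumes st: "stochastic P" and rs: "rotor_seq P dbar \<sigma>" and ad: "admissible_dbar P dbar"
    and rv: "reversible P \<pi>" and pp: "\<forall>v. \<pi> v > 0"
  shows "\<bar>real (rr_chi \<sigma> \<chi>0 T w) - rr_mu P \<chi>0 T w\<bar> \<le>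
    real (max_dbar dbar) / 2 * real (max_deg P) *
      (1 + \<pi> w / pi_min \<pi> * (\<Sum>k<T. \<Sum>z\<in>UNIV. \<bar>mpow P (Suc k) w z - mpow P k w z\<bar>))"
proof -
  define F where "F v u t = psi P \<sigma> v u (cnt \<sigma> \<chi>0 t v)" for v u t
  define a where "a u k = mpow P k u w" for u k
  define X where "X u = \<bar>a u 0\<bar> + (\<Sum>k<T. \<bar>a u (Suc k) - a u k\<bar>)" for u
  let ?B = "real (max_dbar dbar) / 2"
  have dpos: "dbar v > 0" for v using ad by (simp add: admissible_dbar_def)
  have B0: "?B \<ge> 0" by simp
  have X0: "X u \<ge> 0" for u unfolding X_def by (simp add: sum_nonneg)
  have "real (rr_chi \<sigma> \<chi>0 T w) - rr_mu P \<chi>0 T w = (\<Sum>t<T. \<Sum>u\<in>UNIV. \<Sum>v\<in>UNIV. (F v u (Suc t) - F v u t) * a u (T - 1 - t))"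
    unfolding chi_formula[where P=P] delta_def F_def a_def by (simp add: sum_distrib_right)
  also have "\<dots> = (\<Sum>u\<in>UNIV. \<Sum>t<T. \<Sum>v\<in>UNIV. (F v u (Suc t) - F v u t) * a u (T - 1 - t))"
    by (rule sum.swap)
  also have "\<dots> = (\<Sum>u\<in>UNIV. \<Sum>v\<in>UNIV. \<Sum>t<T. (F v u (Suc t) - F v u t) * a u (T - 1 - t))"
    by (rule sum.cong[OF refl], rule sum.swap)
  finally have eq: "real (rr_chi \<sigma> \<chi>0 T w) - rr_mu P \<chi>0 T w = \<dots>" .
  have each: "\<bar>\<Sum>t<T. (F v u (Suc t) - F v u t) * a u (T - 1 - t)\<bar> \<le> (if P v u > 0 then ?B * X u else 0)" for u v
  proof (cases "P v u > 0")
    case True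
    have md: "real (dbar v) \<le> real (max_dbar dbar)" using max_dbar_ge[of dbar v] by simp
    have "\<bar>F v u t\<bar> \<le> ?B" for t
      using psi_bound[OF rs st dpos[of v], of u "cnt \<sigma> \<chi>0 t v"] md unfolding F_def by linarith
    then show ?thesis using abel_bound[where f="F v u" and M="?B" and T=T and a="a u"] True unfolding X_def
      by (simp add: F_def cnt_0)
  next
    case False
    then have "P v u = 0" using stoch_nonneg[OF st, of v u] by simp
    then have "F v u t = 0" for t unfolding F_def using psi_zero[OF rs dpos] by simp
    then show ?thesis using False by simp
  qed
  have "\<bar>real (rr_chi \<sigma> \<chi>0 T w) - rr_mu P \<chi>0 T w\<bar> \<le> (\<Sum>u\<in>UNIV. \<Sum>v\<in>UNIV. (if P v u > 0 then ?B * X u else 0))"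
    unfolding eq by (rule order_trans[OF sum_abs], rule sum_mono, rule order_trans[OF sum_abs], rule sum_mono, rule each)
  also have "\<dots> = (\<Sum>u\<in>UNIV. real (card {v. P v u > 0}) * (?B * X u))"
    by (rule sum.cong[OF refl]) (simp add: sum.If_cases)
  also have "\<dots> \<le> (\<Sum>u\<in>UNIV. real (max_deg P) * (?B * X u))"
    using indeg_le[OF rv pp] by (intro sum_mono mult_right_mono) (auto simp: X0)
  also have "\<dots> = ?B * real (max_deg P) * (\<Sum>u\<in>UNIV. X u)"
    by (simp add: sum_distrib_left sum_distrib_right mult_ac)
  also have "(\<Sum>u\<in>UNIV. X u) \<le> 1 + \<pi> w / pi_min \<pi> * (\<Sum>k<T. \<Sum>z\<in>UNIV. \<bar>mpow P (Suc k) w z - mpow P k w z\<bar>)"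
  proof -
    have s0: "(\<Sum>u\<in>UNIV. \<bar>a u 0\<bar>) = 1"
    proof -
      have "(\<Sum>u\<in>UNIV. \<bar>a u 0\<bar>) = (\<Sum>u\<in>UNIV. if u = w then 1 else 0)"
        unfolding a_def by (rule sum.cong) auto
      then show ?thesis by simp
    qed
    have pm: "pi_min \<pi> > 0" using pi_min_pos[OF pp] .
    have "(\<Sum>u\<in>UNIV. \<bar>a u (Suc k) - a u k\<bar>) \<le> \<pi> w / pi_min \<pi> * (\<Sum>z\<in>UNIV. \<bar>mpow P (Suc k) w z - mpow P k w z\<bar>)" for k
    proof -
      have "\<bar>a u (Suc k) - a u k\<bar> \<le> \<pi> w / pi_min \<pi> * \<bar>mpow P (Suc k) w u - mpow P k w u\<bar>" for u
      proof -
        have pu: "\<pi> u > 0" using pp by simp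
        have gen: "a u j = \<pi> w / \<pi> u * mpow P j w u" for j
        proof -
          have "\<pi> u * mpow P j u w = \<pi> w * mpow P j w u" by (rule rev_pow[OF rv])
          then show ?thesis unfolding a_def using pu by (simp add: field_simps)
        qed
        have "a u (Suc k) - a u k = \<pi> w / \<pi> u * (mpow P (Suc k) w u - mpow P k w u)"
          unfolding gen by (simp only: right_diff_distrib)
        then have e1: "\<bar>a u (Suc k) - a u k\<bar> = \<bar>\<pi> w / \<pi> u\<bar> * \<bar>mpow P (Suc k) w u - mpow P k w u\<bar>"
          by (simp only: abs_mult)
        have "\<bar>\<pi> w / \<pi> u\<bar> = \<pi> w / \<pi> u" using pu pp by (simp add: less_imp_le)
        then have "\<bar>a u (Suc k) - a u k\<bar> = \<pi> w / \<pi> u * \<bar>mpow P (Suc k) w u - mpow P k w u\<bar>"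
          using e1 by simp
        also have "\<dots> \<le> \<pi> w / pi_min \<pi> * \<bar>mpow P (Suc k) w u - mpow P k w u\<bar>"
          using pm pu pp pi_min_le[of \<pi> u]
          by (intro mult_right_mono divide_left_mono) (auto simp: less_imp_le)
        finally show ?thesis .
      qed
      then show ?thesis by (simp add: sum_distrib_left sum_mono)
    qed
    then have "(\<Sum>k<T. \<Sum>u\<in>UNIV. \<bar>a u (Suc k) - a u k\<bar>) \<le> (\<Sum>k<T. \<pi> w / pi_min \<pi> * (\<Sum>z\<in>UNIV. \<bar>mpow P (Suc k) w z - mpow P k w z\<bar>))"
      by (rule sum_mono)
    moreover have "(\<Sum>u\<in>UNIV. X u) = 1 + (\<Sum>k<T. \<Sum>u\<in>UNIV. \<bar>a u (Suc k) - a u k\<bar>)"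
      unfolding X_def sum.distrib s0 by (subst sum.swap) (rule refl)
    ultimately show ?thesis by (simp add: sum_distrib_left)
  qed
  then have "?B * real (max_deg P) * (\<Sum>u\<in>UNIV. X u) \<le> ?B * real (max_deg P) *
      (1 + \<pi> w / pi_min \<pi> * (\<Sum>k<T. \<Sum>z\<in>UNIV. \<bar>mpow P (Suc k) w z - mpow P k w z\<bar>))"
    by (rule mult_left_mono) simp
  finally show ?thesis .
qed



lemma contract:
  fixes \<mu> :: "'v::finite \<Rightarrow> real" and Q :: "'v \<Rightarrow> 'w::finite \<Rightarrow> real"
  assumes s0: "sum \<mu> UNIV = 0" and QB: "\<forall>x y. (\<Sum>z\<in>UNIV. \<bar>Q x z - Q y z\<bar>) \<le> B"
  shows "(\<Sum>z\<in>UNIV. \<bar>\<Sum>x\<in>UNIV. \<mu> x * Q x z\<bar>) \<le> (\<Sum>x\<in>UNIV. \<bar>\<mu> x\<bar>) / 2 * B"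
proof -
  define p where "p x = max (\<mu> x) 0" for x
  define n where "n x = max (- \<mu> x) 0" for x
  define m where "m = sum p UNIV"
  have pn: "\<mu> x = p x - n x" for x unfolding p_def n_def by auto
  have ab: "\<bar>\<mu> x\<bar> = p x + n x" for x unfolding p_def n_def by auto
  have p0: "p x \<ge> 0" and n0: "n x \<ge> 0" for x unfolding p_def n_def by auto
  have "sum \<mu> UNIV = sum p UNIV - sum n UNIV" unfolding pn by (simp add: sum_subtractf)
  then have mn: "sum n UNIV = m" using s0 unfolding m_def by simp
  have am: "(\<Sum>x\<in>UNIV. \<bar>\<mu> x\<bar>) = 2 * m" unfolding ab sum.distrib mn m_def by simp
  have m0: "m \<ge> 0" unfolding m_def by (simp add: sum_nonneg p0)
  show ?thesis
  proof (cases "m = 0")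
    case True
    then have "\<forall>x\<in>UNIV. p x = 0" unfolding m_def using p0 by (subst sum_nonneg_eq_0_iff[symmetric]) auto
    moreover have "\<forall>x\<in>UNIV. n x = 0" using True mn n0 by (subst sum_nonneg_eq_0_iff[symmetric]) auto
    ultimately have "\<mu> x = 0" for x using pn by simp
    then show ?thesis by simp
  next
    case False
    then have mpos: "m > 0" using m0 by simp
    have ident: "m * (\<Sum>x\<in>UNIV. \<mu> x * Q x z) = (\<Sum>x\<in>UNIV. \<Sum>y\<in>UNIV. p x * n y * (Q x z - Q y z))" for z
    proof -
      have f1: "(\<Sum>x\<in>UNIV. \<Sum>y\<in>UNIV. p x * n y * Q x z) = m * (\<Sum>x\<in>UNIV. p x * Q x z)"
      proof -
        have "(\<Sum>x\<in>UNIV. \<Sum>y\<in>UNIV. p x * n y * Q x z) = (\<Sum>x\<in>UNIV. p x * Q x z * (\<Sum>y\<in>UNIV. n y))"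
          by (rule sum.cong[OF refl]) (simp add: sum_distrib_right[symmetric] mult_ac)
        then show ?thesis using mn by (simp add: sum_distrib_left mult_ac)
      qed
      have f2: "(\<Sum>x\<in>UNIV. \<Sum>y\<in>UNIV. p x * n y * Q y z) = m * (\<Sum>y\<in>UNIV. n y * Q y z)"
      proof -
        have "(\<Sum>x\<in>UNIV. \<Sum>y\<in>UNIV. p x * n y * Q y z) = (\<Sum>y\<in>UNIV. \<Sum>x\<in>UNIV. p x * n y * Q y z)"
          by (rule sum.swap)
        also have "\<dots> = (\<Sum>y\<in>UNIV. n y * Q y z * (\<Sum>x\<in>UNIV. p x))"
          by (rule sum.cong[OF refl]) (simp add: sum_distrib_left sum_distrib_right mult_ac)
        finally show ?thesis unfolding m_def by (simp add: sum_distrib_left mult_ac)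
      qed
      have "(\<Sum>x\<in>UNIV. \<Sum>y\<in>UNIV. p x * n y * (Q x z - Q y z)) =
            (\<Sum>x\<in>UNIV. \<Sum>y\<in>UNIV. p x * n y * Q x z) - (\<Sum>x\<in>UNIV. \<Sum>y\<in>UNIV. p x * n y * Q y z)"
        by (simp add: right_diff_distrib sum_subtractf)
      also have "\<dots> = m * ((\<Sum>x\<in>UNIV. p x * Q x z) - (\<Sum>y\<in>UNIV. n y * Q y z))"
        unfolding f1 f2 by (simp add: right_diff_distrib)
      also have "(\<Sum>x\<in>UNIV. p x * Q x z) - (\<Sum>y\<in>UNIV. n y * Q y z) = (\<Sum>x\<in>UNIV. \<mu> x * Q x z)"
        unfolding pn by (simp add: left_diff_distrib sum_subtractf)
      finally show ?thesis by simp
    qed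
    have "m * (\<Sum>z\<in>UNIV. \<bar>\<Sum>x\<in>UNIV. \<mu> x * Q x z\<bar>) = (\<Sum>z\<in>UNIV. \<bar>m * (\<Sum>x\<in>UNIV. \<mu> x * Q x z)\<bar>)"
      using m0 by (simp add: sum_distrib_left[symmetric] abs_mult)
    also have "\<dots> \<le> (\<Sum>z\<in>UNIV. \<Sum>x\<in>UNIV. \<Sum>y\<in>UNIV. p x * n y * \<bar>Q x z - Q y z\<bar>)"
    proof (rule sum_mono)
      fix z
      have "\<bar>m * (\<Sum>x\<in>UNIV. \<mu> x * Q x z)\<bar> \<le> (\<Sum>x\<in>UNIV. \<bar>\<Sum>y\<in>UNIV. p x * n y * (Q x z - Q y z)\<bar>)"
        unfolding ident by (rule sum_abs)
      also have "\<dots> \<le> (\<Sum>x\<in>UNIV. \<Sum>y\<in>UNIV. \<bar>p x * n y * (Q x z - Q y z)\<bar>)"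
        by (rule sum_mono, rule sum_abs)
      also have "\<dots> = (\<Sum>x\<in>UNIV. \<Sum>y\<in>UNIV. p x * n y * \<bar>Q x z - Q y z\<bar>)"
        using p0 n0 by (simp add: abs_mult)
      finally show "\<bar>m * (\<Sum>x\<in>UNIV. \<mu> x * Q x z)\<bar> \<le> \<dots>" .
    qed
    also have "\<dots> = (\<Sum>x\<in>UNIV. \<Sum>y\<in>UNIV. p x * n y * (\<Sum>z\<in>UNIV. \<bar>Q x z - Q y z\<bar>))"
    proof -
      have "(\<Sum>z\<in>UNIV. \<Sum>x\<in>UNIV. \<Sum>y\<in>UNIV. p x * n y * \<bar>Q x z - Q y z\<bar>) =
            (\<Sum>x\<in>UNIV. \<Sum>z\<in>UNIV. \<Sum>y\<in>UNIV. p x * n y * \<bar>Q x z - Q y z\<bar>)" by (rule sum.swap)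
      also have "\<dots> = (\<Sum>x\<in>UNIV. \<Sum>y\<in>UNIV. \<Sum>z\<in>UNIV. p x * n y * \<bar>Q x z - Q y z\<bar>)"
        by (rule sum.cong[OF refl], rule sum.swap)
      finally show ?thesis by (simp add: sum_distrib_left)
    qed
    also have "\<dots> \<le> (\<Sum>x\<in>UNIV. \<Sum>y\<in>UNIV. p x * n y * B)"
      using QB p0 n0 by (intro sum_mono mult_left_mono) auto
    also have "\<dots> = m * m * B"
      unfolding m_def using mn[unfolded m_def] by (simp add: sum_distrib_left[symmetric] sum_distrib_right[symmetric])
    finally have "m * (\<Sum>z\<in>UNIV. \<bar>\<Sum>x\<in>UNIV. \<mu> x * Q x z\<bar>) \<le> m * (m * B)" by simp
    then have "(\<Sum>z\<in>UNIV. \<bar>\<Sum>x\<in>UNIV. \<mu> x * Q x z\<bar>) \<le> m * B" using mpos by simp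
    then show ?thesis unfolding am by simp
  qed
qed



definition L1 :: "('v::finite \<Rightarrow> 'v \<Rightarrow> real) \<Rightarrow> nat \<Rightarrow> 'v \<Rightarrow> 'v \<Rightarrow> real" where
  "L1 P k x y = (\<Sum>z\<in>UNIV. \<bar>mpow P k x z - mpow P k y z\<bar>)"

lemma L1_nonneg: "L1 P k x y \<ge> 0" unfolding L1_def by (simp add: sum_nonneg)

lemma L1_le2: assumes "stochastic P" shows "L1 P k x y \<le> 2"
proof -
  have "L1 P k x y \<le> (\<Sum>z\<in>UNIV. mpow P k x z + mpow P k y z)"
    unfolding L1_def using mpow_nonneg[OF assms] by (intro sum_mono) (simp add: abs_le_iff)
  also have "\<dots> = 2" using mpow_sum[OF assms] by (simp add: sum.distrib)
  finally show ?thesis .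
qed

lemma L1_add:
  assumes st: "stochastic P" and B: "\<forall>x y. L1 P t x y \<le> B"
  shows "L1 P (s+t) x y \<le> L1 P s x y / 2 * B"
proof -
  have "mpow P (s+t) x z - mpow P (s+t) y z = (\<Sum>m\<in>UNIV. (mpow P s x m - mpow P s y m) * mpow P t m z)" for z
    unfolding mpow_add by (simp add: left_diff_distrib sum_subtractf)
  then have "L1 P (s+t) x y = (\<Sum>z\<in>UNIV. \<bar>\<Sum>m\<in>UNIV. (mpow P s x m - mpow P s y m) * mpow P t m z\<bar>)"
    unfolding L1_def by simp
  also have "\<dots> \<le> (\<Sum>m\<in>UNIV. \<bar>mpow P s x m - mpow P s y m\<bar>) / 2 * B"
  proof (rule contract)
    show "(\<Sum>m\<in>UNIV. mpow P s x m - mpow P s y m) = 0" using mpow_sum[OF st] by (simp add: sum_subtractf)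
    show "\<forall>x y. (\<Sum>z\<in>UNIV. \<bar>mpow P t x z - mpow P t y z\<bar>) \<le> B" using B unfolding L1_def .
  qed
  finally show ?thesis unfolding L1_def .
qed

lemma L1_geom:
  assumes st: "stochastic P" and B: "\<forall>x y. L1 P s x y \<le> 2 * \<theta>"
  shows "L1 P (j * s + r) x y \<le> 2 * \<theta> ^ j"
proof (induction j arbitrary: x y)
  case 0 then show ?case using L1_le2[OF st] by simp
next
  case (Suc j)
  have "0 \<le> 2 * \<theta>" using B L1_nonneg[of P s x y] by (meson order_trans)
  then have th: "\<theta> \<ge> 0" by simp
  have h: "L1 P s x y / 2 \<le> \<theta>" using B[rule_format, of x y] by linarith
  have "L1 P (Suc j * s + r) x y = L1 P (s + (j * s + r)) x y" by (simp add: add.assoc)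
  also have "\<dots> \<le> L1 P s x y / 2 * (2 * \<theta> ^ j)" by (rule L1_add[OF st]) (use Suc in blast)
  also have "\<dots> \<le> \<theta> * (2 * \<theta> ^ j)" using h th by (intro mult_right_mono) auto
  finally show ?case by simp
qed

lemma avg_L1:
  fixes \<omega> :: "'a::finite \<Rightarrow> real"
  assumes "\<forall>x. \<omega> x \<ge> 0" "(\<Sum>x\<in>UNIV. \<omega> x) = 1"
  shows "(\<Sum>z\<in>(UNIV::'b::finite set). \<bar>f z - (\<Sum>x\<in>UNIV. \<omega> x * g x z)\<bar>) \<le> (\<Sum>x\<in>UNIV. \<omega> x * (\<Sum>z\<in>UNIV. \<bar>f z - g x z\<bar>))"
proof -
  have e: "f z - (\<Sum>x\<in>UNIV. \<omega> x * g x z) = (\<Sum>x\<in>UNIV. \<omega> x * (f z - g x z))" for z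
  proof -
    have "f z = (\<Sum>x\<in>UNIV. \<omega> x * f z)" using assms(2) by (simp add: sum_distrib_right[symmetric])
    then show ?thesis by (simp add: right_diff_distrib sum_subtractf)
  qed
  have "(\<Sum>z\<in>(UNIV::'b set). \<bar>f z - (\<Sum>x\<in>UNIV. \<omega> x * g x z)\<bar>) \<le> (\<Sum>z\<in>UNIV. \<Sum>x\<in>UNIV. \<omega> x * \<bar>f z - g x z\<bar>)"
    unfolding e using assms(1) by (intro sum_mono) (rule order_trans[OF sum_abs], simp add: abs_mult)
  also have "\<dots> = (\<Sum>x\<in>UNIV. \<omega> x * (\<Sum>z\<in>UNIV. \<bar>f z - g x z\<bar>))"
    by (subst sum.swap) (simp add: sum_distrib_left)
  finally show ?thesis .
qed

lemma cons_bound: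
  assumes st: "stochastic P" and B: "\<forall>x. L1 P k w x \<le> B"
  shows "(\<Sum>z\<in>UNIV. \<bar>mpow P (Suc k) w z - mpow P k w z\<bar>) \<le> B"
proof -
  have "(\<Sum>z\<in>UNIV. \<bar>mpow P (Suc k) w z - mpow P k w z\<bar>) = (\<Sum>z\<in>UNIV. \<bar>mpow P k w z - (\<Sum>x\<in>UNIV. P w x * mpow P k x z)\<bar>)"
    unfolding mpow_Suc_left by (simp add: abs_minus_commute)
  also have "\<dots> \<le> (\<Sum>x\<in>UNIV. P w x * L1 P k w x)"
    unfolding L1_def by (rule avg_L1) (auto simp: stoch_nonneg[OF st] stoch_sum[OF st])
  also have "\<dots> \<le> (\<Sum>x\<in>UNIV. P w x * B)" using B stoch_nonneg[OF st] by (intro sum_mono mult_left_mono) auto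
  also have "\<dots> = B" using stoch_sum[OF st] by (simp add: sum_distrib_right[symmetric])
  finally show ?thesis .
qed

definition tvd :: "('v::finite \<Rightarrow> 'v \<Rightarrow> real) \<Rightarrow> ('v \<Rightarrow> real) \<Rightarrow> nat \<Rightarrow> 'v \<Rightarrow> real" where
  "tvd P \<pi> k v = (\<Sum>z\<in>UNIV. \<bar>mpow P k v z - \<pi> z\<bar>)"

lemma tvd_Suc:
  assumes st: "stochastic P" and sp: "stationary P \<pi>"
  shows "tvd P \<pi> (Suc k) v \<le> tvd P \<pi> k v"
proof -
  have "mpow P (Suc k) v z - \<pi> z = (\<Sum>m\<in>UNIV. (mpow P k v m - \<pi> m) * P m z)" for z
    using sp unfolding stationary_def by (simp add: left_diff_distrib sum_subtractf)
  then have "tvd P \<pi> (Suc k) v = (\<Sum>z\<in>UNIV. \<bar>\<Sum>m\<in>UNIV. (mpow P k v m - \<pi> m) * P m z\<bar>)"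
    unfolding tvd_def by simp
  also have "\<dots> \<le> (\<Sum>z\<in>UNIV. \<Sum>m\<in>UNIV. \<bar>mpow P k v m - \<pi> m\<bar> * P m z)"
    using stoch_nonneg[OF st] by (intro sum_mono) (rule order_trans[OF sum_abs], simp add: abs_mult)
  also have "\<dots> = (\<Sum>m\<in>UNIV. \<bar>mpow P k v m - \<pi> m\<bar> * (\<Sum>z\<in>UNIV. P m z))"
    by (subst sum.swap) (simp add: sum_distrib_left)
  also have "\<dots> = tvd P \<pi> k v" unfolding tvd_def using stoch_sum[OF st] by simp
  finally show ?thesis .
qed

lemma tvd_mono:
  assumes "stochastic P" "stationary P \<pi>" "k \<le> k'"
  shows "tvd P \<pi> k' v \<le> tvd P \<pi> k v"
  using lift_Suc_antimono_le[of "\<lambda>k. tvd P \<pi> k v", OF tvd_Suc[OF assms(1,2)] assms(3)] .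

lemma tvd_L1:
  assumes st: "stochastic P" and sp: "stationary P \<pi>" and B: "\<forall>y. L1 P t v y \<le> B"
  shows "tvd P \<pi> t v \<le> B"
proof -
  have "tvd P \<pi> t v = (\<Sum>z\<in>UNIV. \<bar>mpow P t v z - (\<Sum>y\<in>UNIV. \<pi> y * mpow P t y z)\<bar>)"
    unfolding tvd_def stat_pow[OF sp] ..
  also have "\<dots> \<le> (\<Sum>y\<in>UNIV. \<pi> y * L1 P t v y)"
    unfolding L1_def by (rule avg_L1) (use sp in \<open>auto simp: stationary_def\<close>)
  also have "\<dots> \<le> (\<Sum>y\<in>UNIV. \<pi> y * B)" using B sp by (intro sum_mono mult_left_mono) (auto simp: stationary_def)
  also have "\<dots> = B" using sp by (simp add: sum_distrib_right[symmetric] stationary_def)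
  finally show ?thesis .
qed

lemma sum_div_blocks:
  assumes "t > 0"
  shows "(\<Sum>k<t * m. f (k div t)) = real t * (\<Sum>j<m. (f j :: real))"
proof (induction m)
  case 0 then show ?case by simp
next
  case (Suc m)
  have "(\<Sum>k<t * Suc m. f (k div t)) = (\<Sum>k<t * m. f (k div t)) + (\<Sum>k\<in>{t*m..<t*m+t}. f (k div t))"
    by (simp add: lessThan_atLeast0 sum.atLeastLessThan_concat add.commute)
  also have "(\<Sum>k\<in>{t*m..<t*m+t}. f (k div t)) = (\<Sum>k\<in>{t*m..<t*m+t}. f m)"
  proof (rule sum.cong[OF refl])
    fix k assume "k \<in> {t*m..<t*m+t}"
    then have "t * m \<le> k" "k < t * Suc m" by auto
    then have "k div t = m" by (rule div_nat_eqI)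
    then show "f (k div t) = f m" by simp
  qed
  finally show ?case using Suc by (simp add: algebra_simps)
qed

lemma geo_block_sum:
  assumes "t > 0"
  shows "(\<Sum>k<T. 2 * (1/2::real) ^ (k div t)) \<le> 4 * real t"
proof -
  define m where "m = Suc (T div t)"
  have h1: "T = t * (T div t) + T mod t" by simp
  have h2: "T mod t < t" using assms by simp
  have "T \<le> t * m" unfolding m_def mult_Suc_right using h1 h2 by linarith
  then have "(\<Sum>k<T. 2 * (1/2::real) ^ (k div t)) \<le> (\<Sum>k<t * m. 2 * (1/2::real) ^ (k div t))"
    by (intro sum_mono2) auto
  also have "\<dots> = real t * (\<Sum>j<m. 2 * (1/2::real) ^ j)" by (rule sum_div_blocks[OF assms])
  also have "(\<Sum>j<m. 2 * (1/2::real) ^ j) \<le> 4"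
  proof -
    have "(\<Sum>j\<in>{..<m}. (1/2::real) ^ j) < 1 / (1 - 1/2)" by (rule geometric_sum_less) auto
    then show ?thesis by (simp add: sum_distrib_left[symmetric])
  qed
  then have "real t * (\<Sum>j<m. 2 * (1/2::real) ^ j) \<le> real t * 4" by (intro mult_left_mono) auto
  finally show ?thesis by simp
qed



lemma semigroup_large:
  fixes S :: "nat set"
  assumes add: "\<And>a b. a \<in> S \<Longrightarrow> b \<in> S \<Longrightarrow> a + b \<in> S" and z: "0 \<notin> S" and g: "Gcd S = 1"
  shows "\<exists>n0. \<forall>n\<ge>n0. n \<in> S"
proof -
  have lin: "x + q * y \<in> S" if xy: "x \<in> S" "y \<in> S" for x y q
  proof (induction q)
    case 0 then show ?case using xy by simp
  next
    case (Suc q)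
    have "x + Suc q * y = (x + q * y) + y" by simp
    then show ?case using add[OF Suc.IH xy(2)] by metis
  qed
  have mul: "q * y \<in> S" if y: "y \<in> S" and q1: "q \<ge> 1" for q y
  proof -
    obtain q' where "q = Suc q'" using q1 by (cases q) auto
    then show ?thesis using lin[OF y y, of q'] by (simp add: add.commute)
  qed
  have "S \<noteq> {}" using g by auto
  then obtain s where s: "s \<in> S" by auto
  have s0: "s > 0" using s z by (cases s) auto
  define D where "D = {k. k > 0 \<and> (\<exists>a\<in>S. \<exists>b\<in>S. a = b + k)}"
  have sD: "s \<in> D" unfolding D_def using s s0 add[OF s s] by auto
  define m where "m = (LEAST k. k \<in> D)"
  have mD: "m \<in> D" unfolding m_def using sD by (rule LeastI)
  have mle: "m \<le> k" if "k \<in> D" for k unfolding m_def using that by (rule Least_le)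
  obtain a0 b0 where ab: "a0 \<in> S" "b0 \<in> S" "a0 = b0 + m" and m0: "m > 0" using mD unfolding D_def by auto
  have dv: "m dvd x" if x: "x \<in> S" for x
  proof (rule ccontr)
    assume nd: "\<not> m dvd x"
    define q where "q = x div m"
    define \<rho> where "\<rho> = x mod m"
    have \<rho>0: "\<rho> > 0" using nd unfolding \<rho>_def by (metis dvd_eq_mod_eq_0 gr0I)
    have \<rho>m: "\<rho> < m" unfolding \<rho>_def using m0 by simp
    have xe: "x = q * m + \<rho>" unfolding q_def \<rho>_def by simp
    have A: "x + x + q * b0 \<in> S" using lin[OF add[OF x x] ab(2)] .
    have B: "x + q * a0 \<in> S" using lin[OF x ab(1)] .
    have "x + x + q * b0 = (x + q * a0) + \<rho>" using xe ab(3) by (simp add: algebra_simps)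
    then have "\<rho> \<in> D" unfolding D_def using A B \<rho>0 by blast
    then show False using mle \<rho>m by fastforce
  qed
  have "m dvd Gcd S" by (rule Gcd_greatest) (rule dv)
  then have m1: "m = 1" using g by simp
  obtain b where b: "b \<in> S" "b + 1 \<in> S" using ab m1 by auto
  have b0: "b > 0" using b(1) z by (cases b) auto
  show ?thesis
  proof (intro exI allI impI)
    fix n assume n: "b * b \<le> n"
    define q where "q = n div b"
    define \<rho> where "\<rho> = n mod b"
    have "b * b div b \<le> n div b" using n by (rule div_le_mono)
    then have qb: "b \<le> q" unfolding q_def using b0 by simp
    have \<rho>b: "\<rho> < b" unfolding \<rho>_def using b0 by simp
    have ne: "n = (q - \<rho>) * b + \<rho> * (b + 1)"
    proof -
      have "n = q * b + \<rho>" unfolding q_def \<rho>_def by simp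
      moreover have "(q - \<rho>) * b + \<rho> * b = q * b" using qb \<rho>b
        by (metis add_mult_distrib le_add_diff_inverse2 less_imp_le order.strict_trans2)
      ultimately show ?thesis by (simp add: algebra_simps)
    qed
    have "(q - \<rho>) * b \<in> S" using mul[OF b(1)] qb \<rho>b by simp
    then have "(q - \<rho>) * b + \<rho> * (b + 1) \<in> S" using lin b(2) by blast
    then show "n \<in> S" using ne by simp
  qed
qed

lemma primitive:
  assumes st: "stochastic P" and er: "ergodic P"
  shows "\<exists>r. \<forall>x y. mpow P r x y > 0"
proof -
  have "\<exists>n0. \<forall>n\<ge>n0. mpow P n v v > 0" for v
  proof -
    let ?S = "{t. 0 < t \<and> mpow P t v v > 0}"
    have "\<exists>n0. \<forall>n\<ge>n0. n \<in> ?S"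
    proof (rule semigroup_large)
      fix a b assume "a \<in> ?S" "b \<in> ?S"
      then have "mpow P a v v * mpow P b v v > 0" "0 < a + b" by auto
      then show "a + b \<in> ?S" using mpow_ge[OF st, where a=a and b=b and x=v and y=v and z=v] by auto
    next
      show "0 \<notin> ?S" by simp
      show "Gcd ?S = 1" using er unfolding ergodic_def aperiodic_chain_def by blast
    qed
    then show ?thesis by auto
  qed
  then have "\<forall>v. \<exists>n0. \<forall>n\<ge>n0. mpow P n v v > 0" by blast
  then obtain N where N: "\<forall>v. \<forall>n\<ge>N v. mpow P n v v > 0" using choice[of "\<lambda>v n0. \<forall>n\<ge>n0. mpow P n v v > 0"] by blast
  have "\<forall>p. \<exists>t. mpow P t (fst p) (snd p) > 0" using er unfolding ergodic_def irreducible_chain_def by blast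
  then obtain A where A: "\<forall>p. mpow P (A p) (fst p) (snd p) > 0" using choice[of "\<lambda>p t. mpow P t (fst p) (snd p) > 0"] by blast
  define R where "R = (\<Sum>p\<in>UNIV. A p) + (\<Sum>v\<in>UNIV. N v)"
  have "mpow P R x y > 0" for x y
  proof -
    have a: "A (x,y) \<le> (\<Sum>p\<in>UNIV. A p)" by (rule member_le_sum) auto
    have n: "N y \<le> (\<Sum>v\<in>UNIV. N v)" by (rule member_le_sum) auto
    have R: "R = A (x,y) + (R - A (x,y))" "R - A (x,y) \<ge> N y" unfolding R_def using a n by auto
    have "mpow P (A (x,y)) x y * mpow P (R - A (x,y)) y y > 0" using A N R(2) by (metis fst_conv snd_conv mult_pos_pos)
    also have "\<dots> \<le> mpow P R x y" using mpow_ge[OF st, where a="A (x,y)" and b="R - A (x,y)" and x=x and y=y and z=y] R(1) by simp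
    finally show ?thesis .
  qed
  then show ?thesis by blast
qed

lemma L1_lt2:
  assumes st: "stochastic P" and pos: "\<forall>x y. mpow P r x y > 0"
  shows "L1 P r x y < 2"
proof -
  have "L1 P r x y < (\<Sum>z\<in>UNIV. mpow P r x z + mpow P r y z)"
    unfolding L1_def
  proof (rule sum_strict_mono_ex1)
    show "\<forall>z\<in>UNIV. \<bar>mpow P r x z - mpow P r y z\<bar> \<le> mpow P r x z + mpow P r y z"
      using mpow_nonneg[OF st] by (auto simp: abs_le_iff)
    show "\<exists>z\<in>UNIV. \<bar>mpow P r x z - mpow P r y z\<bar> < mpow P r x z + mpow P r y z"
      using pos[rule_format, of x x] pos[rule_format, of y x] by (intro bexI[of _ x]) (auto simp: abs_less_iff)
  qed auto
  also have "\<dots> = 2" using mpow_sum[OF st] by (simp add: sum.distrib)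
  finally show ?thesis .
qed

lemma converge:
  assumes st: "stochastic P" and er: "ergodic P" and sp: "stationary P \<pi>"
  shows "\<exists>K. \<forall>v. tvd P \<pi> K v \<le> 1/2"
proof -
  obtain r where pos: "\<forall>x y. mpow P r x y > 0" using primitive[OF st er] by blast
  define M where "M = Max (range (\<lambda>p. L1 P r (fst p) (snd p)))"
  have Mge: "L1 P r x y \<le> M" for x y unfolding M_def by (rule Max_ge) (auto intro: image_eqI[of _ _ "(x,y)"])
  have "M \<in> range (\<lambda>p. L1 P r (fst p) (snd p))" unfolding M_def by (rule Max_in) auto
  then have Mlt: "M < 2" using L1_lt2[OF st pos] by auto
  define \<theta> where "\<theta> = M / 2"
  have th: "\<forall>x y. L1 P r x y \<le> 2 * \<theta>" using Mge unfolding \<theta>_def by simp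
  have th1: "\<theta> < 1" using Mlt unfolding \<theta>_def by simp
  obtain j where j: "\<theta> ^ j < 1/4" using real_arch_pow_inv[of "1/4" \<theta>] th1 by auto
  have "\<forall>y. L1 P (j * r + 0) v y \<le> 2 * \<theta> ^ j" for v using L1_geom[OF st th] by blast
  then have "tvd P \<pi> (j * r) v \<le> 2 * \<theta> ^ j" for v using tvd_L1[OF st sp] by simp
  moreover have "2 * \<theta> ^ j < 1/2" using j by simp
  ultimately have "tvd P \<pi> (j * r) v \<le> 1/2" for v by (meson less_imp_le order_trans)
  then show ?thesis by blast
qed

lemma dTV_tvd: "d_TV (mpow P t v) \<pi> = tvd P \<pi> t v / 2"
  unfolding d_TV_def tvd_def by simp

lemma mixing_rate_tvd:
  assumes st: "stochastic P" and er: "ergodic P" and sp: "stationary P \<pi>"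
  shows "tvd P \<pi> (mixing_rate P \<pi>) v \<le> 1/2"
proof -
  obtain K where K: "\<forall>v. tvd P \<pi> K v \<le> 1/2" using converge[OF st er sp] by blast
  define L where "L = (LEAST t. d_TV (mpow P t v) \<pi> \<le> 1/4)"
  have "d_TV (mpow P K v) \<pi> \<le> 1/4" using K[rule_format, of v] dTV_tvd[of P K v \<pi>] by linarith
  then have "d_TV (mpow P L v) \<pi> \<le> 1/4" unfolding L_def by (rule LeastI)
  then have tl: "tvd P \<pi> L v \<le> 1/2" using dTV_tvd[of P L v \<pi>] by simp
  have "L \<le> mixing_rate P \<pi>" unfolding mixing_rate_def mixing_time_def L_def
    by (rule Max_ge) auto
  then show ?thesis using tvd_mono[OF st sp] tl by (meson order_trans)
qed

lemma L1_tri: "L1 P t x y \<le> tvd P \<pi> t x + tvd P \<pi> t y"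
proof -
  have "L1 P t x y \<le> (\<Sum>z\<in>UNIV. \<bar>mpow P t x z - \<pi> z\<bar> + \<bar>mpow P t y z - \<pi> z\<bar>)"
    unfolding L1_def by (intro sum_mono) linarith
  then show ?thesis unfolding tvd_def by (simp add: sum.distrib)
qed

lemma mixing_zero_singleton:
  fixes P :: "'v::finite \<Rightarrow> 'v \<Rightarrow> real"
  assumes st: "stochastic P" and er: "ergodic P" and sp: "stationary P \<pi>" and z: "mixing_rate P \<pi> = 0"
  shows "x = (y::'v)"
proof (rule ccontr)
  assume xy: "x \<noteq> y"
  have h: "tvd P \<pi> 0 v \<le> 1/2" for v using mixing_rate_tvd[OF st er sp, of v] z by simp
  have two: "\<bar>mpow P 0 v v - \<pi> v\<bar> + \<bar>mpow P 0 v u - \<pi> u\<bar> \<le> tvd P \<pi> 0 v" if "u \<noteq> v" for u v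
  proof -
    have "(\<Sum>z\<in>{v,u}. \<bar>mpow P 0 v z - \<pi> z\<bar>) \<le> (\<Sum>z\<in>UNIV. \<bar>mpow P 0 v z - \<pi> z\<bar>)"
      by (rule sum_mono2) auto
    then show ?thesis unfolding tvd_def using that by simp
  qed
  have "\<bar>1 - \<pi> x\<bar> + \<bar>\<pi> y\<bar> \<le> 1/2" using two[of y x] h[of x] xy by simp
  moreover have "\<bar>1 - \<pi> y\<bar> + \<bar>\<pi> x\<bar> \<le> 1/2" using two[of x y] h[of y] xy by simp
  ultimately show False by linarith
qed



theorem theorem5p9:
  fixes P :: "'v::finite \<Rightarrow> 'v \<Rightarrow> real"
    and \<pi> :: "'v \<Rightarrow> real"
    and dbar :: "'v \<Rightarrow> nat"
    and \<sigma> :: "'v \<Rightarrow> nat \<Rightarrow> 'v"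
    and \<chi>0 :: "'v \<Rightarrow> nat"
  assumes "stochastic P" and "rational_matrix P" and "ergodic P"
    and "stationary P \<pi>" and "reversible P \<pi>"
    and "admissible_dbar P dbar" and "rotor_seq P dbar \<sigma>"
  shows "\<forall>w T. \<bar>real (rr_chi \<sigma> \<chi>0 T w) - rr_mu P \<chi>0 T w\<bar>
           \<le> 3 * \<pi> w / pi_min \<pi> * real (mixing_rate P \<pi>) * real (max_deg P) * real (max_dbar dbar)"
proof (intro allI)
  fix w T
  note st = assms(1) and er = assms(3) and sp = assms(4) and rv = assms(5) and ad = assms(6) and rs = assms(7)
  have irr: "irreducible_chain P" using er by (simp add: ergodic_def)
  have pp: "\<forall>v. \<pi> v > 0" using pi_pos[OF sp irr st] by blast
  have pm: "pi_min \<pi> > 0" using pi_min_pos[OF pp] .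
  define t where "t = mixing_rate P \<pi>"
  show "\<bar>real (rr_chi \<sigma> \<chi>0 T w) - rr_mu P \<chi>0 T w\<bar>
           \<le> 3 * \<pi> w / pi_min \<pi> * real (mixing_rate P \<pi>) * real (max_deg P) * real (max_dbar dbar)"
  proof (cases "t = 0")
    case True
    have sing: "x = y" for x y :: 'v using mixing_zero_singleton[OF st er sp] True unfolding t_def by blast
    have U: "UNIV = {u}" for u :: 'v using sing by auto
    have P1: "P v u = 1" for v u
    proof -
      have "(\<Sum>x\<in>UNIV. P v x) = P v u" by (subst U[of u]) simp
      then show ?thesis using stoch_sum[OF st, of v] by simp
    qed
    have "psi P \<sigma> v u z = 0" for v u z
      unfolding psi_def using sing[of "\<sigma> v _" u] P1 by simp
    then have "delta P \<sigma> \<chi>0 s u = 0" for s u unfolding delta_def by simp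
    moreover have "real (rr_chi \<sigma> \<chi>0 T w) = rr_mu P \<chi>0 T w + (\<Sum>s<T. \<Sum>u\<in>UNIV. delta P \<sigma> \<chi>0 s u * mpow P (T-1-s) u w)"
      by (rule chi_formula)
    ultimately have "real (rr_chi \<sigma> \<chi>0 T w) - rr_mu P \<chi>0 T w = 0" by simp
    then show ?thesis using True unfolding t_def by simp
  next
    case False
    then have t1: "t \<ge> 1" by simp
    have tv: "tvd P \<pi> t v \<le> 1/2" for v unfolding t_def by (rule mixing_rate_tvd[OF st er sp])
    have L1t: "\<forall>x y. L1 P t x y \<le> 2 * (1/2)" using L1_tri[of P t _ _ \<pi>] tv by (smt (verit))
    have cons: "(\<Sum>z\<in>UNIV. \<bar>mpow P (Suc k) w z - mpow P k w z\<bar>) \<le> 2 * (1/2) ^ (k div t)" for k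
    proof (rule cons_bound[OF st], rule allI)
      fix x
      have "L1 P (k div t * t + k mod t) w x \<le> 2 * (1/2) ^ (k div t)" by (rule L1_geom[OF st L1t])
      then show "L1 P k w x \<le> 2 * (1/2) ^ (k div t)" by simp
    qed
    define S where "S = (\<Sum>k<T. \<Sum>z\<in>UNIV. \<bar>mpow P (Suc k) w z - mpow P k w z\<bar>)"
    have S4: "S \<le> 4 * real t"
    proof -
      have "S \<le> (\<Sum>k<T. 2 * (1/2::real) ^ (k div t))" unfolding S_def by (rule sum_mono) (rule cons)
      also have "\<dots> \<le> 4 * real t" using t1 by (intro geo_block_sum) simp
      finally show ?thesis .
    qed
    define r where "r = \<pi> w / pi_min \<pi>"
    have r1: "r \<ge> 1" unfolding r_def using pm pi_min_le[of \<pi> w] by simp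
    define C where "C = real (max_dbar dbar) / 2 * real (max_deg P)"
    have C0: "C \<ge> 0" unfolding C_def by simp
    have "\<bar>real (rr_chi \<sigma> \<chi>0 T w) - rr_mu P \<chi>0 T w\<bar> \<le> C * (1 + r * S)"
      using discrepancy[OF st rs ad rv pp, of \<chi>0 T w] unfolding C_def r_def S_def .
    also have "\<dots> \<le> C * (1 + r * (4 * real t))"
      using S4 r1 C0 by (intro mult_left_mono add_left_mono) auto
    also have "\<dots> \<le> C * (6 * (r * real t))"
    proof -
      have rt: "real t \<ge> 1" using t1 by simp
      have "1 * 1 \<le> r * real t" using mult_mono[of 1 r 1 "real t"] r1 rt by simp
      then have "r * real t \<ge> 1" by simp
      then show ?thesis using C0 by (intro mult_left_mono) auto
    qed
    also have "\<dots> = 3 * \<pi> w / pi_min \<pi> * real (mixing_rate P \<pi>) * real (max_deg P) * real (max_dbar dbar)"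
      unfolding C_def r_def t_def by (simp add: field_simps)
    finally show ?thesis .
  qed
qed


end
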